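(* Let $G$ be a graph, $b\ge0$, $\beta:E(G)\to\{0,1,2,3\}$, $C$ a vertex cover of $G$, and let $\delta$ be a $b$-bend $\beta$-restricted RAC drawing of $G$. Let $T$ be a type whose vertices have exactly two neighbors in $C$, and let $T'\subseteq T$ consist of all members of $T$ which have no bends in $\delta$. Then $T'$ contains at most four members that are involved in crossings with other members of $T'$ in $\delta$.
   Context: All graphs are simple and undirected. A drawing of a graph $G=(V,E)$ maps vertices injectively to points of $\mathbb{R}^2$ and each edge $uv$ to a simple curve joining the images of $u$ and $v$, such that no vertex image lies in the relative interior of the image of an edge not incident to it. A polyline drawing is a drawing in which each edge is drawn as a union of closed straight-line segments $\lambda_1,\dots,\lambda_t$, where consecutive segments share exactly one endpoint and form an angle different from $180^\circ$, and non-consecutive segments are disjoint; the shared points are the bends of the edge. A crossing of two edges is a common point of the relative interiors of their drawings; drawings have finitely many crossings. Two edges have a right-angle crossing if the crossing lies in the relative interiors of the respective segments and these segments are orthogonal. Given $b\in\mathbb{N}$ and $\beta:E\to\{0,1,2,3\}$, a $b$-bend $\beta$-restricted RAC drawing of $G$ is a polyline drawing in which every crossing is a right-angle crossing, the total number of bends is at most $b$, and each edge $e$ has at most $\beta(e)$ bends. Types: $V(G)\setminus C$ is partitioned so that two vertices have the same type iff they have the same set of neighbors in $C$. A member of a type is a vertex of the type together with its incident edges; a member has no bends if none of its incident edges has a bend, and a member is involved in a crossing if one of its incident edges is. *)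

theory Defs
  imports "HOL-Analysis.Analysis"
begin

type_synonym pt = "real \<times> real"

definition simple_graph :: "'v set \<Rightarrow> 'v set set \<Rightarrow> bool" where
  "simple_graph V E \<longleftrightarrow> finite V \<and> (\<forall>e\<in>E. e \<subseteq> V \<and> card e = 2)"

definition nbrs :: "'v set set \<Rightarrow> 'v \<Rightarrow> 'v set" where
  "nbrs E v = {u. {u, v} \<in> E}"

definition vertex_cover :: "'v set \<Rightarrow> 'v set set \<Rightarrow> 'v set \<Rightarrow> bool" where
  "vertex_cover V E C \<longleftrightarrow> C \<subseteq> V \<and> (\<forall>e\<in>E. e \<inter> C \<noteq> {})"

definition is_type :: "'v set \<Rightarrow> 'v set set \<Rightarrow> 'v set \<Rightarrow> 'v set \<Rightarrow> bool" where
  "is_type V E C T \<longleftrightarrow>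
     (\<exists>v\<in>V - C. T = {w \<in> V - C. nbrs E w \<inter> C = nbrs E v \<inter> C})"

text \<open>A polyline is given by its list of points p0,...,pt (endpoints and bends in order).
  Segment i is [p_i, p_(i+1)].\<close>
definition seg :: "pt list \<Rightarrow> nat \<Rightarrow> pt set" where
  "seg ps i = closed_segment (ps ! i) (ps ! Suc i)"

definition polyline :: "pt list \<Rightarrow> bool" where
  "polyline ps \<longleftrightarrow> length ps \<ge> 2
     \<and> (\<forall>i. Suc i < length ps \<longrightarrow> ps ! i \<noteq> ps ! Suc i)
     \<and> (\<forall>i. i + 2 < length ps \<longrightarrow>
           seg ps i \<inter> seg ps (Suc i) = {ps ! Suc i}
         \<and> \<not> collinear {ps ! i, ps ! Suc i, ps ! (i + 2)})
     \<and> (\<forall>i j. Suc i < j \<longrightarrow> Suc j < length ps \<longrightarrow> seg ps i \<inter> seg ps j = {})"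

definition curve :: "pt list \<Rightarrow> pt set" where
  "curve ps = (\<Union>i\<in>{i. Suc i < length ps}. seg ps i)"

definition edge_interior :: "pt list \<Rightarrow> pt set" where
  "edge_interior ps = curve ps - {hd ps, last ps}"

definition bends :: "pt list \<Rightarrow> nat" where
  "bends ps = length ps - 2"

definition polyline_drawing ::
  "'v set \<Rightarrow> 'v set set \<Rightarrow> ('v \<Rightarrow> pt) \<Rightarrow> ('v set \<Rightarrow> pt list) \<Rightarrow> bool" where
  "polyline_drawing V E pos pl \<longleftrightarrow>
     inj_on pos V
   \<and> (\<forall>e\<in>E. polyline (pl e) \<and> {hd (pl e), last (pl e)} = pos ` e)
   \<and> (\<forall>e\<in>E. \<forall>v\<in>V. v \<notin> e \<longrightarrow> pos v \<notin> edge_interior (pl e))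
   \<and> finite {p. \<exists>e\<in>E. \<exists>f\<in>E. e \<noteq> f \<and> p \<in> edge_interior (pl e) \<inter> edge_interior (pl f)}"

definition crosses :: "('v set \<Rightarrow> pt list) \<Rightarrow> 'v set \<Rightarrow> 'v set \<Rightarrow> bool" where
  "crosses pl e f \<longleftrightarrow> e \<noteq> f \<and> edge_interior (pl e) \<inter> edge_interior (pl f) \<noteq> {}"

definition right_angle_at :: "pt list \<Rightarrow> pt list \<Rightarrow> pt \<Rightarrow> bool" where
  "right_angle_at ps qs p \<longleftrightarrow>
     (\<exists>i j. Suc i < length ps \<and> Suc j < length qs
        \<and> p \<in> open_segment (ps ! i) (ps ! Suc i)
        \<and> p \<in> open_segment (qs ! j) (qs ! Suc j)
        \<and> inner (ps ! Suc i - ps ! i) (qs ! Suc j - qs ! j) = 0)"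

definition rac_drawing ::
  "'v set \<Rightarrow> 'v set set \<Rightarrow> nat \<Rightarrow> ('v set \<Rightarrow> nat) \<Rightarrow> ('v \<Rightarrow> pt) \<Rightarrow> ('v set \<Rightarrow> pt list) \<Rightarrow> bool" where
  "rac_drawing V E b \<beta> pos pl \<longleftrightarrow>
     polyline_drawing V E pos pl
   \<and> (\<forall>e\<in>E. \<forall>f\<in>E. e \<noteq> f \<longrightarrow>
        (\<forall>p \<in> edge_interior (pl e) \<inter> edge_interior (pl f). right_angle_at (pl e) (pl f) p))
   \<and> (\<Sum>e\<in>E. bends (pl e)) \<le> b
   \<and> (\<forall>e\<in>E. bends (pl e) \<le> \<beta> e)"

definition member_no_bends :: "'v set set \<Rightarrow> ('v set \<Rightarrow> pt list) \<Rightarrow> 'v \<Rightarrow> bool" where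
  "member_no_bends E pl v \<longleftrightarrow> (\<forall>e\<in>E. v \<in> e \<longrightarrow> bends (pl e) = 0)"

end

theory Submission
  imports Defs
begin


definition cr :: "pt \<Rightarrow> pt \<Rightarrow> real" where
  "cr U W = fst U * snd W - snd U * fst W"
definition xc :: "pt \<Rightarrow> pt \<Rightarrow> pt \<Rightarrow> real" where
  "xc A B Z = inner (Z - A) (B - A)"
definition yc :: "pt \<Rightarrow> pt \<Rightarrow> pt \<Rightarrow> real" where
  "yc A B Z = cr (B - A) (Z - A)"
definition dd :: "pt \<Rightarrow> pt \<Rightarrow> real" where
  "dd A B = inner (B - A) (B - A)"

lemma inner_pt: "inner (U::pt) W = fst U * fst W + snd U * snd W"
  by (simp add: inner_prod_def)

lemma dd_pos: "A \<noteq> B \<Longrightarrow> dd A B > 0"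
  by (simp add: dd_def)

lemma coord_eq:
  assumes "A \<noteq> B" "xc A B Z = xc A B W" "yc A B Z = yc A B W"
  shows "Z = W"
proof -
  obtain d1 d2 where d: "B - A = (d1, d2)" by (cases "B - A")
  obtain u1 u2 where u: "Z - W = (u1, u2)" by (cases "Z - W")
  have dn: "d1 * d1 + d2 * d2 > 0"
    proof -
    have "(d1, d2) \<noteq> (0, 0)" using assms(1) d by (metis eq_iff_diff_eq_0 zero_prod_def)
    then show ?thesis by (simp add: sum_squares_gt_zero_iff)
  qed
  have "Z - A = (W - A) + (Z - W)" by simp
  have e1: "d1 * u1 + d2 * u2 = 0"
  proof -
    have "inner (Z - W) (B - A) = inner (Z - A) (B - A) - inner (W - A) (B - A)"
      by (simp add: inner_diff_left)
    then show ?thesis using assms(2) unfolding xc_def by (simp add: d u inner_pt algebra_simps)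
  qed
  have e2: "d1 * u2 - d2 * u1 = 0"
  proof -
    have "cr (B - A) (Z - A) - cr (B - A) (W - A) = cr (B - A) (Z - W)"
      by (simp add: cr_def algebra_simps)
    then show ?thesis using assms(3) unfolding yc_def by (simp add: d u cr_def algebra_simps)
  qed
  have "u1 * (d1 * d1 + d2 * d2) = d1 * (d1 * u1 + d2 * u2) - d2 * (d1 * u2 - d2 * u1)"
    by (simp add: algebra_simps)
  then have "u1 * (d1 * d1 + d2 * d2) = 0" using e1 e2 by simp
  then have "u1 = 0" using dn by (metis mult_eq_0_iff less_irrefl)
  have "u2 * (d1 * d1 + d2 * d2) = d2 * (d1 * u1 + d2 * u2) + d1 * (d1 * u2 - d2 * u1)"
    by (simp add: algebra_simps)
  then have "u2 * (d1 * d1 + d2 * d2) = 0" using e1 e2 by simp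
  then have "u2 = 0" using dn by (metis mult_eq_0_iff less_irrefl)
  then show ?thesis using \<open>u1 = 0\<close> u by (simp add: zero_prod_def[symmetric])
qed

lemma xc_A: "xc A B ((1 - s) *\<^sub>R A + s *\<^sub>R P) = s * xc A B P"
  by (simp add: xc_def inner_pt algebra_simps)
lemma yc_A: "yc A B ((1 - s) *\<^sub>R A + s *\<^sub>R P) = s * yc A B P"
  by (simp add: yc_def cr_def algebra_simps)
lemma xc_B: "xc A B ((1 - s) *\<^sub>R B + s *\<^sub>R P) = dd A B + s * (xc A B P - dd A B)"
  by (simp add: xc_def dd_def inner_pt algebra_simps)
lemma yc_B: "yc A B ((1 - s) *\<^sub>R B + s *\<^sub>R P) = s * yc A B P"
  by (simp add: yc_def cr_def algebra_simps)
lemma xc_AA: "xc A B A = 0" by (simp add: xc_def)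
lemma yc_AA: "yc A B A = 0" by (simp add: yc_def cr_def)
lemma xc_BB: "xc A B B = dd A B" by (simp add: xc_def dd_def)
lemma yc_BB: "yc A B B = 0" by (simp add: yc_def cr_def)

lemma inner_AB: "dd A B * inner (P - A) (Q - B) = xc A B P * (xc A B Q - dd A B) + yc A B P * yc A B Q"
  by (simp add: xc_def yc_def dd_def cr_def inner_pt algebra_simps)
lemma inner_AA: "dd A B * inner (P - A) (Q - A) = xc A B P * xc A B Q + yc A B P * yc A B Q"
  by (simp add: xc_def yc_def dd_def cr_def inner_pt algebra_simps)
lemma inner_BB: "dd A B * inner (P - B) (Q - B) = (xc A B P - dd A B) * (xc A B Q - dd A B) + yc A B P * yc A B Q"
  by (simp add: xc_def yc_def dd_def cr_def inner_pt algebra_simps)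




lemma frac_less:
  fixes a b c d :: real
  assumes "0 < c" "0 < d"
  shows "a / c < b / d \<longleftrightarrow> a * d < b * c"
  using assms by (simp add: divide_less_eq less_divide_eq mult.commute mult.left_commute)

lemma frac_eq:
  fixes a b c d :: real
  assumes "0 < c" "0 < d"
  shows "a / c = b / d \<longleftrightarrow> a * d = b * c"
  using assms by (simp add: frac_eq_eq mult.commute)

lemma SH:
  fixes s t x1 y1 x2 y2 :: real
  assumes "0 < s" "0 < t" "s * x1 = t * x2" "s * y1 = t * y2" "x1 * x2 + y1 * y2 = 0"
    "\<not> (x2 = 0 \<and> y2 = 0)"
  shows False
proof -
  have "s * (x1 * x2 + y1 * y2) = t * (x2 * x2 + y2 * y2)"
    using assms(3,4) by (metis mult.assoc distrib_left)
  then have "t * (x2 * x2 + y2 * y2) = 0" using assms(5) by simp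
  then have "x2 * x2 + y2 * y2 = 0" using assms(2) by simp
  then show False using assms(6) by (simp add: sum_squares_eq_zero_iff)
qed

lemma REL0:
  fixes D s t xv yv xw yw :: real
  assumes "0 < s" "0 < t" "s * yv = t * yw" "xv * (xw - D) + yv * yw = 0"
    "\<not> (xv = 0 \<and> yv = 0)" "\<not> (xw = D \<and> yw = 0)"
  shows "yv \<noteq> 0"
proof
  assume "yv = 0"
  then have "yw = 0" using assms by simp
  then show False using assms \<open>yv = 0\<close> by simp
qed

lemma REL1:
  fixes D s t xv yv xw yw \<sigma> :: real
  assumes "0 < D" "0 < s" "s < 1" "0 < t" "t < 1" "s * xv = D + t * (xw - D)" "s * yv = t * yw"
    "\<sigma> * yv > 0"
  shows "\<sigma> * yw > 0 \<and> xw / (\<sigma> * yw) < xv / (\<sigma> * yv) \<and> (D - xv) / (\<sigma> * yv) < (D - xw) / (\<sigma> * yw)"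
proof -
  have "\<sigma> * yw * t > 0" using assms(2,7,8) by (metis mult.commute mult.left_commute mult_pos_pos)
  then have w: "\<sigma> * yw > 0" using assms(4) by (simp add: zero_less_mult_iff)
  have 1: "xw / (\<sigma> * yw) < xv / (\<sigma> * yv)"
  proof -
    have "xw * (\<sigma> * yv) < xv * (\<sigma> * yw)"
    proof -
      have "s * (xw * (\<sigma> * yv)) = \<sigma> * (xw * (t * yw))" using assms(7) by (simp add: algebra_simps)
      also have "\<dots> = \<sigma> * yw * (t * xw)" by (simp add: algebra_simps)
      also have "\<dots> = \<sigma> * yw * (s * xv - D * (1 - t))" using assms(6) by (simp add: algebra_simps)
      also have "\<dots> < \<sigma> * yw * (s * xv)" using w assms(1,5) by (intro mult_strict_left_mono) simp_all
      also have "\<dots> = s * (xv * (\<sigma> * yw))" by (simp add: algebra_simps)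
      finally show ?thesis using assms(2) by simp
    qed
    then show ?thesis using w assms(8) by (simp add: frac_less)
  qed
  have 2: "(D - xv) / (\<sigma> * yv) < (D - xw) / (\<sigma> * yw)"
  proof -
    have "(D - xv) * (\<sigma> * yw) < (D - xw) * (\<sigma> * yv)"
    proof -
      have "t * ((D - xv) * (\<sigma> * yw)) = \<sigma> * (D - xv) * (s * yv)" using assms(7) by (simp add: algebra_simps)
      also have "\<dots> = \<sigma> * yv * (s * D - s * xv)" by (simp add: algebra_simps)
      also have "\<dots> = \<sigma> * yv * (t * (D - xw) - D * (1 - s))"
      proof -
        have "s * D - s * xv = t * (D - xw) - D * (1 - s)" using assms(6) by (simp add: algebra_simps)
        then show ?thesis by simp
      qed
      also have "\<dots> < \<sigma> * yv * (t * (D - xw))" using assms(1,3,8) by (intro mult_strict_left_mono) simp_all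
      also have "\<dots> = t * ((D - xw) * (\<sigma> * yv))" by (simp add: algebra_simps)
      finally show ?thesis using assms(4) by simp
    qed
    then show ?thesis using w assms(8) by (simp add: frac_less)
  qed
  show ?thesis using w 1 2 by simp
qed

lemma ORTH:
  fixes D xp yp xq yq \<sigma> :: real
  assumes "\<sigma> = 1 \<or> \<sigma> = -1" "\<sigma> * yp > 0" "\<sigma> * yq > 0" "xp * (xq - D) + yp * yq = 0"
  shows "xp / (\<sigma> * yp) * ((D - xq) / (\<sigma> * yq)) = 1"
proof -
  have "yp \<noteq> 0" "yq \<noteq> 0" using assms by auto
  have "xp * (D - xq) = yp * yq" using assms(4) by (simp add: algebra_simps)
  then show ?thesis using assms(1) \<open>yp \<noteq> 0\<close> \<open>yq \<noteq> 0\<close> by (auto simp: field_simps)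
qed

lemma FORCE:
  fixes D xp yp xq yq \<sigma> :: real
  assumes "0 < D" "\<sigma> = 1 \<or> \<sigma> = -1" "\<sigma> * yp > 0" "\<sigma> * yq > 0"
    "xq / (\<sigma> * yq) < xp / (\<sigma> * yp)" "(D - xp) / (\<sigma> * yp) < (D - xq) / (\<sigma> * yq)"
  shows "\<exists>s t. 0 < s \<and> s < 1 \<and> 0 < t \<and> t < 1 \<and> s * xp = D + t * (xq - D) \<and> s * yp = t * yq"
proof -
  have c1: "xq * (\<sigma> * yp) < xp * (\<sigma> * yq)" using assms(3,4,5) by (simp add: frac_less)
  have c2: "(D - xp) * (\<sigma> * yq) < (D - xq) * (\<sigma> * yp)" using assms(3,4,6) by (simp add: frac_less)
  define K where "K = xp * yq + (D - xq) * yp"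
  have sK: "\<sigma> * K > D * (\<sigma> * yq)" using c2 unfolding K_def by (simp add: algebra_simps)
  have sK2: "\<sigma> * K > D * (\<sigma> * yp)" using c1 unfolding K_def by (simp add: algebra_simps)
  have Kp: "\<sigma> * K > 0" using sK assms(1,4) by (smt (verit) mult_pos_pos)
  have K0: "K \<noteq> 0" using Kp by auto
  define s where "s = D * yq / K"
  define t where "t = D * yp / K"
  have s_eq: "s = D * (\<sigma> * yq) / (\<sigma> * K)" using assms(2) unfolding s_def by auto
  have t_eq: "t = D * (\<sigma> * yp) / (\<sigma> * K)" using assms(2) unfolding t_def by auto
  have "0 < s" unfolding s_eq using assms(1,4) Kp by (metis divide_pos_pos mult_pos_pos)
  moreover have "s < 1" unfolding s_eq using sK Kp by (simp only: divide_less_eq_1_pos)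
  moreover have "0 < t" unfolding t_eq using assms(1,3) Kp by (metis divide_pos_pos mult_pos_pos)
  moreover have "t < 1" unfolding t_eq using sK2 Kp by (simp only: divide_less_eq_1_pos)
  moreover have "s * xp = D + t * (xq - D)" unfolding s_def t_def using K0
    by (simp add: field_simps K_def)
  moreover have "s * yp = t * yq" unfolding s_def t_def by simp
  ultimately show ?thesis by blast
qed

lemma INJ:
  fixes xp yp xq yq \<sigma> :: real
  assumes "\<sigma> = 1 \<or> \<sigma> = -1" "\<sigma> * yp > 0" "\<sigma> * yq > 0" "xp / (\<sigma> * yp) = xq / (\<sigma> * yq)"
  shows "\<exists>s t. 0 < s \<and> s < 1 \<and> 0 < t \<and> t < 1 \<and> s * xp = t * xq \<and> s * yp = t * yq"
proof -
  have c: "xp * (\<sigma> * yq) = xq * (\<sigma> * yp)" using assms(2,3,4) by (simp add: frac_eq)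
  define s where "s = \<sigma> * yq / (\<sigma> * yp + \<sigma> * yq)"
  define t where "t = \<sigma> * yp / (\<sigma> * yp + \<sigma> * yq)"
  have "0 < s" "s < 1" "0 < t" "t < 1" using assms(2,3) unfolding s_def t_def by (simp_all add: divide_simps)
  moreover have "s * yp = t * yq" unfolding s_def t_def by (simp add: algebra_simps)
  moreover have "s * xp = t * xq" unfolding s_def t_def using c by (simp add: algebra_simps)
  ultimately show ?thesis by blast
qed




lemma comb_pair:
  fixes a b :: "'v \<Rightarrow> real"
  assumes inja: "\<forall>p\<in>M. \<forall>q\<in>M. a p = a q \<longrightarrow> p = q"
    and injb: "\<forall>p\<in>M. \<forall>q\<in>M. b p = b q \<longrightarrow> p = q"
    and F: "\<forall>p\<in>M. \<forall>q\<in>M. a q < a p \<and> b p < b q \<longrightarrow> a p * b q = 1"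
    and S: "\<forall>p\<in>M. a p + b p > 0"
    and M: "u \<in> M" "v \<in> M" "x \<in> M" "y \<in> M"
    and R1: "a v < a u" "b u < b v" and R2: "a y < a x" "b x < b y"
  shows "x = u \<and> y = v"
proof -
  have Fuv: "a u * b v = 1" using F M R1 by blast
  have Fxy: "a x * b y = 1" using F M R2 by blast
  have pos: "a u > 0" "b v > 0" "a x > 0" "b y > 0"
  proof -
    have "a u + b v > 0" using S M R1 by (smt (verit))
    then show "a u > 0" "b v > 0" using Fuv by (smt (verit) mult_nonpos_nonneg mult_nonneg_nonpos mult_nonpos_nonpos)+
  next
    have "a x + b y > 0" using S M R2 by (smt (verit))
    then show "a x > 0" "b y > 0" using Fxy by (smt (verit) mult_nonpos_nonneg mult_nonneg_nonpos mult_nonpos_nonpos)+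
  qed
  consider "a u < a x" | "a x < a u" | "a x = a u" by linarith
  then show ?thesis
  proof cases
    case 1
    have "b v < b x"
    proof -
      have "b x \<noteq> b v"
      proof
        assume "b x = b v"
        then have "x = v" using injb M by blast
        then show False using 1 R1 by simp
      qed
      moreover have "\<not> b x < b v"
      proof
        assume "b x < b v"
        then have "a x * b v = 1" using F M 1 R1 by (meson less_trans)
        then show False using Fuv 1 pos by (smt (verit) mult_strict_right_mono)
      qed
      ultimately show ?thesis by linarith
    qed
    then have "b v < b y" using R2 by linarith
    have "a u * b v < a x * b y"
      using pos 1 \<open>b v < b y\<close> by (smt (verit) mult_strict_mono)
    then show ?thesis using Fuv Fxy by simp
  next
    case 2
    have "b y < b u"
    proof -
      have "b u \<noteq> b y"
      proof
        assume "b u = b y"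
        then have "u = y" using injb M by blast
        then show False using 2 R2 by simp
      qed
      moreover have "\<not> b u < b y"
      proof
        assume "b u < b y"
        then have "a u * b y = 1" using F M 2 R2 by (meson less_trans)
        then show False using Fxy 2 pos by (smt (verit) mult_strict_right_mono)
      qed
      ultimately show ?thesis by linarith
    qed
    then have "b y < b v" using R1 by linarith
    have "a x * b y < a u * b v"
      using pos 2 \<open>b y < b v\<close> by (smt (verit) mult_strict_mono)
    then show ?thesis using Fuv Fxy by simp
  next
    case 3
    then have "x = u" using inja M by blast
    then have "b y = b v" using Fuv Fxy pos by (metis mult_left_cancel less_irrefl)
    then show ?thesis using injb M \<open>x = u\<close> by blast
  qed
qed

lemma comb:
  fixes a b :: "'v \<Rightarrow> real"
  assumes inja: "\<forall>p\<in>M. \<forall>q\<in>M. a p = a q \<longrightarrow> p = q"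
    and injb: "\<forall>p\<in>M. \<forall>q\<in>M. b p = b q \<longrightarrow> p = q"
    and F: "\<forall>p\<in>M. \<forall>q\<in>M. a q < a p \<and> b p < b q \<longrightarrow> a p * b q = 1"
    and S: "\<forall>p\<in>M. a p + b p > 0"
  shows "card {v\<in>M. \<exists>w\<in>M. (a w < a v \<and> b v < b w) \<or> (a v < a w \<and> b w < b v)} \<le> 2"
proof (cases "\<exists>u\<in>M. \<exists>v\<in>M. a v < a u \<and> b u < b v")
  case False
  then have "{v\<in>M. \<exists>w\<in>M. (a w < a v \<and> b v < b w) \<or> (a v < a w \<and> b w < b v)} = {}" using False by auto
  then show ?thesis by (metis card.empty zero_le)
next
  case True
  then obtain u v where uv: "u \<in> M" "v \<in> M" "a v < a u" "b u < b v" by blast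
  have "{v\<in>M. \<exists>w\<in>M. (a w < a v \<and> b v < b w) \<or> (a v < a w \<and> b w < b v)} \<subseteq> {u, v}"
  proof
    fix z assume "z \<in> {v\<in>M. \<exists>w\<in>M. (a w < a v \<and> b v < b w) \<or> (a v < a w \<and> b w < b v)}"
    then obtain w where z: "z \<in> M" "w \<in> M" "(a w < a z \<and> b z < b w) \<or> (a z < a w \<and> b w < b z)" by blast
    then show "z \<in> {u, v}"
      using comb_pair[OF inja injb F S uv(1,2) z(1,2) uv(3,4)]
        comb_pair[OF inja injb F S uv(1,2) z(2,1) uv(3,4)] by blast
  qed
  then have "card {v\<in>M. \<exists>w\<in>M. (a w < a v \<and> b v < b w) \<or> (a v < a w \<and> b w < b v)} \<le> card {u, v}"
    by (intro card_mono) simp_all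
  also have "card {u, v} \<le> 2" by (simp add: card_insert_if)
  finally show ?thesis .
qed




lemma straight_edge:
  assumes "polyline ps" "bends ps = 0" "{hd ps, last ps} = {X, Y}" "X \<noteq> Y"
  shows "ps = [X, Y] \<or> ps = [Y, X]"
proof -
  have "length ps = 2" using assms(1,2) unfolding polyline_def bends_def by simp
  then obtain p0 p1 where ps: "ps = [p0, p1]"
    by (metis (no_types, lifting) One_nat_def Suc_1 length_0_conv length_Suc_conv)
  then show ?thesis using assms(3,4) by (auto simp: doubleton_eq_iff)
qed

lemma straight_interior:
  assumes "ps = [X, Y] \<or> ps = [Y, X]"
  shows "edge_interior ps = open_segment X Y"
proof -
  have c: "{i. Suc i < length ps} = {0}" using assms by auto
  show ?thesis using assms
    by (auto simp: edge_interior_def curve_def c seg_def open_segment_def closed_segment_commute)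
qed

lemma straight_ra:
  assumes "ps = [X, Y] \<or> ps = [Y, X]" "qs = [Z, W] \<or> qs = [W, Z]" "right_angle_at ps qs p"
  shows "inner (X - Y) (Z - W) = 0"
proof -
  from assms(3) obtain i j where ij: "Suc i < length ps" "Suc j < length qs"
    "inner (ps ! Suc i - ps ! i) (qs ! Suc j - qs ! j) = 0"
    unfolding right_angle_at_def by blast
  have "i = 0" "j = 0" using ij(1,2) assms(1,2) by auto
  then show ?thesis using ij(3) assms(1,2)
    by (auto simp: inner_diff_left inner_diff_right algebra_simps)
qed

lemma seg_param:
  assumes "p \<in> open_segment P A"
  shows "\<exists>s. 0 < s \<and> s < 1 \<and> p = (1 - s) *\<^sub>R A + s *\<^sub>R P"
  using assms by (auto simp: in_segment open_segment_commute[of P A])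

lemma seg_mem:
  assumes "0 < s" "s < 1" "A \<noteq> P"
  shows "(1 - s) *\<^sub>R A + s *\<^sub>R P \<in> open_segment P A"
  using assms by (auto simp: in_segment open_segment_commute[of P A])




theorem lemma10:
  fixes V :: "'v set" and E :: "'v set set" and b :: nat and \<beta> :: "'v set \<Rightarrow> nat"
    and C T :: "'v set" and pos :: "'v \<Rightarrow> pt" and pl :: "'v set \<Rightarrow> pt list"
  assumes "simple_graph V E"
    and "\<forall>e\<in>E. \<beta> e \<le> 3"
    and "vertex_cover V E C"
    and "rac_drawing V E b \<beta> pos pl"
    and "is_type V E C T"
    and "\<forall>v\<in>T. card (nbrs E v \<inter> C) = 2"
  shows "card {v \<in> {u \<in> T. member_no_bends E pl u}.
            \<exists>w \<in> {u \<in> T. member_no_bends E pl u}. w \<noteq> v \<and>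
              (\<exists>e\<in>E. \<exists>f\<in>E. v \<in> e \<and> w \<in> f \<and> crosses pl e f)} \<le> 4"
proof -
  define T' where "T' = {u \<in> T. member_no_bends E pl u}"
  define S where "S = {v \<in> T'. \<exists>w \<in> T'. w \<noteq> v \<and> (\<exists>e\<in>E. \<exists>f\<in>E. v \<in> e \<and> w \<in> f \<and> crosses pl e f)}"
  have G: "finite V" "\<forall>e\<in>E. e \<subseteq> V \<and> card e = 2" using assms(1) unfolding simple_graph_def by auto
  have VC: "C \<subseteq> V" "\<forall>e\<in>E. e \<inter> C \<noteq> {}" using assms(3) unfolding vertex_cover_def by auto
  have PD: "polyline_drawing V E pos pl" using assms(4) unfolding rac_drawing_def by blast
  have RA: "\<forall>e\<in>E. \<forall>f\<in>E. e \<noteq> f \<longrightarrow>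
        (\<forall>p \<in> edge_interior (pl e) \<inter> edge_interior (pl f). right_angle_at (pl e) (pl f) p)"
    using assms(4) unfolding rac_drawing_def by blast
  have inj: "inj_on pos V" and PL: "\<forall>e\<in>E. polyline (pl e) \<and> {hd (pl e), last (pl e)} = pos ` e"
    using PD unfolding polyline_drawing_def by auto
  obtain v0 where v0: "v0 \<in> V - C" "T = {w \<in> V - C. nbrs E w \<inter> C = nbrs E v0 \<inter> C}"
    using assms(5) unfolding is_type_def by blast
  have "v0 \<in> T" using v0 by blast
  then have "card (nbrs E v0 \<inter> C) = 2" using assms(6) by blast
  then obtain a c where ac: "a \<noteq> c" "nbrs E v0 \<inter> C = {a, c}" by (meson card_2_iff)
  have acC: "a \<in> C" "c \<in> C" using ac by auto
  have acV: "a \<in> V" "c \<in> V" using acC VC by auto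
  have TN: "\<And>v. v \<in> T \<Longrightarrow> v \<in> V \<and> v \<notin> C \<and> nbrs E v \<inter> C = {a, c}" using v0 ac by auto
  have Ea: "\<And>v. v \<in> T \<Longrightarrow> {v, a} \<in> E" using TN unfolding nbrs_def by (auto simp: insert_commute)
  have Ec: "\<And>v. v \<in> T \<Longrightarrow> {v, c} \<in> E" using TN unfolding nbrs_def by (auto simp: insert_commute)
  have EO: "\<And>v e. v \<in> T \<Longrightarrow> e \<in> E \<Longrightarrow> v \<in> e \<Longrightarrow> e = {v, a} \<or> e = {v, c}"
  proof -
    fix v e assume v: "v \<in> T" and e: "e \<in> E" "v \<in> e"
    have "card e = 2" using G e by blast
    then obtain u where u: "e = {v, u}" "u \<noteq> v" using e(2)
      by (metis card_2_iff empty_iff insert_commute insert_iff)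
    have "u \<in> C" using VC(2) e(1) u TN[OF v] by auto
    moreover have "u \<in> nbrs E v" using e(1) u unfolding nbrs_def by (simp add: insert_commute)
    ultimately have "u = a \<or> u = c" using TN[OF v] by auto
    then show "e = {v, a} \<or> e = {v, c}" using u by auto
  qed
  define A where "A = pos a"
  define B where "B = pos c"
  have AB: "A \<noteq> B" using inj acV ac unfolding A_def B_def inj_on_def by blast
  have PA: "\<And>v. v \<in> T \<Longrightarrow> pos v \<noteq> A" using inj acV acC TN unfolding A_def inj_on_def by metis
  have PB: "\<And>v. v \<in> T \<Longrightarrow> pos v \<noteq> B" using inj acV acC TN unfolding B_def inj_on_def by metis
  have SA: "\<And>v. v \<in> T' \<Longrightarrow> pl {v, a} = [pos v, A] \<or> pl {v, a} = [A, pos v]"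
  proof -
    fix v assume v: "v \<in> T'"
    then have vT: "v \<in> T" unfolding T'_def by blast
    have "bends (pl {v, a}) = 0" using v Ea[OF vT] unfolding T'_def member_no_bends_def by blast
    then show "pl {v, a} = [pos v, A] \<or> pl {v, a} = [A, pos v]"
      using straight_edge[of "pl {v,a}" "pos v" A] PL Ea[OF vT] PA[OF vT] unfolding A_def by auto
  qed
  have SB: "\<And>v. v \<in> T' \<Longrightarrow> pl {v, c} = [pos v, B] \<or> pl {v, c} = [B, pos v]"
  proof -
    fix v assume v: "v \<in> T'"
    then have vT: "v \<in> T" unfolding T'_def by blast
    have "bends (pl {v, c}) = 0" using v Ec[OF vT] unfolding T'_def member_no_bends_def by blast
    then show "pl {v, c} = [pos v, B] \<or> pl {v, c} = [B, pos v]"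
      using straight_edge[of "pl {v,c}" "pos v" B] PL Ec[OF vT] PB[OF vT] unfolding B_def by auto
  qed
  have T'T: "T' \<subseteq> T" unfolding T'_def by blast

  have RA': "\<And>e f z. e \<in> E \<Longrightarrow> f \<in> E \<Longrightarrow> e \<noteq> f \<Longrightarrow> z \<in> edge_interior (pl e) \<Longrightarrow>
      z \<in> edge_interior (pl f) \<Longrightarrow> right_angle_at (pl e) (pl f) z"
    using RA by blast
  have T'V: "\<And>v. v \<in> T' \<Longrightarrow> v \<in> T" using T'T by blast
  define D where "D = dd A B"
  define X where "X v = xc A B (pos v)" for v
  define Y where "Y v = yc A B (pos v)" for v
  have Dp: "D > 0" unfolding D_def using dd_pos AB by blast
  have NA: "\<And>v. v \<in> T \<Longrightarrow> \<not> (X v = 0 \<and> Y v = 0)"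
    using PA coord_eq[OF AB] xc_AA yc_AA unfolding X_def Y_def by metis
  have NB: "\<And>v. v \<in> T \<Longrightarrow> \<not> (X v = D \<and> Y v = 0)"
    using PB coord_eq[OF AB] xc_BB yc_BB unfolding X_def Y_def D_def by metis
  define rel where "rel v w \<longleftrightarrow> (\<exists>s t. 0 < s \<and> s < 1 \<and> 0 < t \<and> t < 1 \<and>
      s * X v = D + t * (X w - D) \<and> s * Y v = t * Y w \<and> X v * (X w - D) + Y v * Y w = 0)" for v w
  have crossAA: "\<And>v w p. v \<in> T' \<Longrightarrow> w \<in> T' \<Longrightarrow> p \<in> open_segment (pos v) A \<Longrightarrow>
      p \<in> open_segment (pos w) A \<Longrightarrow> inner (pos v - A) (pos w - A) = 0 \<Longrightarrow> False"
  proof -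
    fix v w p assume v: "v \<in> T'" and w: "w \<in> T'" and p: "p \<in> open_segment (pos v) A"
      "p \<in> open_segment (pos w) A" and i: "inner (pos v - A) (pos w - A) = 0"
    obtain s where s: "0 < s" "s < 1" "p = (1 - s) *\<^sub>R A + s *\<^sub>R pos v" using seg_param[OF p(1)] by blast
    obtain t where t: "0 < t" "t < 1" "p = (1 - t) *\<^sub>R A + t *\<^sub>R pos w" using seg_param[OF p(2)] by blast
    have 1: "s * X v = t * X w" using s(3) t(3) xc_A unfolding X_def by metis
    have 2: "s * Y v = t * Y w" using s(3) t(3) yc_A unfolding Y_def by metis
    have 3: "X v * X w + Y v * Y w = 0" using inner_AA[of A B "pos v" "pos w"] i unfolding X_def Y_def by simp
    show False using SH[OF s(1) t(1) 1 2 3] NA[OF T'V[OF w]] by blast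
  qed
  have crossBB: "\<And>v w p. v \<in> T' \<Longrightarrow> w \<in> T' \<Longrightarrow> p \<in> open_segment (pos v) B \<Longrightarrow>
      p \<in> open_segment (pos w) B \<Longrightarrow> inner (pos v - B) (pos w - B) = 0 \<Longrightarrow> False"
  proof -
    fix v w p assume v: "v \<in> T'" and w: "w \<in> T'" and p: "p \<in> open_segment (pos v) B"
      "p \<in> open_segment (pos w) B" and i: "inner (pos v - B) (pos w - B) = 0"
    obtain s where s: "0 < s" "s < 1" "p = (1 - s) *\<^sub>R B + s *\<^sub>R pos v" using seg_param[OF p(1)] by blast
    obtain t where t: "0 < t" "t < 1" "p = (1 - t) *\<^sub>R B + t *\<^sub>R pos w" using seg_param[OF p(2)] by blast
    have "D + s * (X v - D) = D + t * (X w - D)" using s(3) t(3) xc_B unfolding X_def D_def by metis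
    then have 1: "s * (X v - D) = t * (X w - D)" by simp
    have 2: "s * Y v = t * Y w" using s(3) t(3) yc_B unfolding Y_def by metis
    have 3: "(X v - D) * (X w - D) + Y v * Y w = 0"
      using inner_BB[of A B "pos v" "pos w"] i unfolding X_def Y_def D_def by simp
    show False using SH[OF s(1) t(1) 1 2 3] NB[OF T'V[OF w]] by auto
  qed
  have crossAB: "\<And>v w p. v \<in> T' \<Longrightarrow> w \<in> T' \<Longrightarrow> p \<in> open_segment (pos v) A \<Longrightarrow>
      p \<in> open_segment (pos w) B \<Longrightarrow> inner (pos v - A) (pos w - B) = 0 \<Longrightarrow> rel v w"
  proof -
    fix v w p assume v: "v \<in> T'" and w: "w \<in> T'" and p: "p \<in> open_segment (pos v) A"
      "p \<in> open_segment (pos w) B" and i: "inner (pos v - A) (pos w - B) = 0"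
    obtain s where s: "0 < s" "s < 1" "p = (1 - s) *\<^sub>R A + s *\<^sub>R pos v" using seg_param[OF p(1)] by blast
    obtain t where t: "0 < t" "t < 1" "p = (1 - t) *\<^sub>R B + t *\<^sub>R pos w" using seg_param[OF p(2)] by blast
    have 1: "s * X v = D + t * (X w - D)" using s(3) t(3) xc_A xc_B unfolding X_def D_def by metis
    have 2: "s * Y v = t * Y w" using s(3) t(3) yc_A yc_B unfolding Y_def by metis
    have 3: "X v * (X w - D) + Y v * Y w = 0"
      using inner_AB[of A B "pos v" "pos w"] i unfolding X_def Y_def D_def by simp
    show "rel v w" unfolding rel_def using s t 1 2 3 by blast
  qed
  have CR: "\<And>v w e f. v \<in> T' \<Longrightarrow> w \<in> T' \<Longrightarrow> e \<in> E \<Longrightarrow> f \<in> E \<Longrightarrow> v \<in> e \<Longrightarrow> w \<in> f \<Longrightarrow>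
      crosses pl e f \<Longrightarrow> rel v w \<or> rel w v"
  proof -
    fix v w e f assume v: "v \<in> T'" and w: "w \<in> T'" and ef: "e \<in> E" "f \<in> E" "v \<in> e" "w \<in> f"
      and cr: "crosses pl e f"
    obtain p where p: "e \<noteq> f" "p \<in> edge_interior (pl e)" "p \<in> edge_interior (pl f)"
      using cr unfolding crosses_def by blast
    have ra: "right_angle_at (pl e) (pl f) p" using RA' ef p by blast
    have e: "e = {v, a} \<or> e = {v, c}" using EO[OF T'V[OF v] ef(1,3)] .
    have f: "f = {w, a} \<or> f = {w, c}" using EO[OF T'V[OF w] ef(2,4)] .
    have IA: "\<And>u. u \<in> T' \<Longrightarrow> edge_interior (pl {u, a}) = open_segment (pos u) A"
      using SA straight_interior by blast
    have IB: "\<And>u. u \<in> T' \<Longrightarrow> edge_interior (pl {u, c}) = open_segment (pos u) B"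
      using SB straight_interior by blast
    show "rel v w \<or> rel w v"
    proof (cases "e = {v, a}")
      case ea: True
      show ?thesis
      proof (cases "f = {w, a}")
        case True
        have "inner (pos v - A) (pos w - A) = 0"
          using straight_ra[OF SA[OF v] SA[OF w]] ra ea True by simp
        moreover have "p \<in> open_segment (pos v) A" using p(2) IA[OF v] ea by simp
        moreover have "p \<in> open_segment (pos w) A" using p(3) IA[OF w] True by simp
        ultimately show ?thesis using crossAA[OF v w] by blast
      next
        case False
        then have fc: "f = {w, c}" using f by blast
        have "inner (pos v - A) (pos w - B) = 0"
          using straight_ra[OF SA[OF v] SB[OF w]] ra ea fc by simp
        moreover have "p \<in> open_segment (pos v) A" using p(2) IA[OF v] ea by simp
        moreover have "p \<in> open_segment (pos w) B" using p(3) IB[OF w] fc by simp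
        ultimately show ?thesis using crossAB[OF v w] by blast
      qed
    next
      case False
      then have ec: "e = {v, c}" using e by blast
      show ?thesis
      proof (cases "f = {w, a}")
        case True
        have "inner (pos v - B) (pos w - A) = 0"
          using straight_ra[OF SB[OF v] SA[OF w]] ra ec True by simp
        then have "inner (pos w - A) (pos v - B) = 0" by (simp add: inner_commute)
        moreover have "p \<in> open_segment (pos v) B" using p(2) IB[OF v] ec by simp
        moreover have "p \<in> open_segment (pos w) A" using p(3) IA[OF w] True by simp
        ultimately show ?thesis using crossAB[OF w v] by blast
      next
        case False
        then have fc: "f = {w, c}" using f by blast
        have "inner (pos v - B) (pos w - B) = 0"
          using straight_ra[OF SB[OF v] SB[OF w]] ra ec fc by simp
        moreover have "p \<in> open_segment (pos v) B" using p(2) IB[OF v] ec by simp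
        moreover have "p \<in> open_segment (pos w) B" using p(3) IB[OF w] fc by simp
        ultimately show ?thesis using crossBB[OF v w] by blast
      qed
    qed
  qed

  define M where "M \<sigma> = {v \<in> T'. \<sigma> * Y v > 0}" for \<sigma> :: real
  define aa where "aa \<sigma> v = X v / (\<sigma> * Y v)" for \<sigma> :: real and v
  define bb where "bb \<sigma> v = (D - X v) / (\<sigma> * Y v)" for \<sigma> :: real and v
  define SS where "SS \<sigma> = {v\<in>M \<sigma>. \<exists>w\<in>M \<sigma>. (aa \<sigma> w < aa \<sigma> v \<and> bb \<sigma> v < bb \<sigma> w) \<or>
      (aa \<sigma> v < aa \<sigma> w \<and> bb \<sigma> w < bb \<sigma> v)}" for \<sigma> :: real
  have EIA: "\<And>u z. u \<in> T' \<Longrightarrow> z \<in> open_segment (pos u) A \<Longrightarrow> z \<in> edge_interior (pl {u, a})"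
    using SA straight_interior by blast
  have EIB: "\<And>u z. u \<in> T' \<Longrightarrow> z \<in> open_segment (pos u) B \<Longrightarrow> z \<in> edge_interior (pl {u, c})"
    using SB straight_interior by blast
  have ua: "\<And>u. u \<in> T \<Longrightarrow> u \<noteq> a \<and> u \<noteq> c" using TN acC by blast
  have cardSS: "card (SS \<sigma>) \<le> 2" if sg: "\<sigma> = 1 \<or> \<sigma> = -1" for \<sigma> :: real
    unfolding SS_def
  proof (rule comb)
    show "\<forall>p\<in>M \<sigma>. \<forall>q\<in>M \<sigma>. aa \<sigma> p = aa \<sigma> q \<longrightarrow> p = q"
    proof (intro ballI impI)
      fix p q assume p: "p \<in> M \<sigma>" and q: "q \<in> M \<sigma>" and eq: "aa \<sigma> p = aa \<sigma> q"
      show "p = q"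
      proof (rule ccontr)
        assume pq: "p \<noteq> q"
        have pT: "p \<in> T'" "\<sigma> * Y p > 0" using p unfolding M_def by auto
        have qT: "q \<in> T'" "\<sigma> * Y q > 0" using q unfolding M_def by auto
        obtain s t where st: "0 < s" "s < 1" "0 < t" "t < 1" "s * X p = t * X q" "s * Y p = t * Y q"
          using INJ[OF sg pT(2) qT(2)] eq unfolding aa_def by blast
        define z where "z = (1 - s) *\<^sub>R A + s *\<^sub>R pos p"
        have z2: "z = (1 - t) *\<^sub>R A + t *\<^sub>R pos q"
          unfolding z_def by (rule coord_eq[OF AB]) (use st in \<open>simp_all add: xc_A yc_A X_def Y_def\<close>)
        have z1m: "z \<in> open_segment (pos p) A" unfolding z_def
          using seg_mem[OF st(1,2)] PA T'V pT(1) by metis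
        have z2m: "z \<in> open_segment (pos q) A" unfolding z2
          using seg_mem[OF st(3,4)] PA T'V qT(1) by metis
        have ne: "{p, a} \<noteq> {q, a}" using pq ua T'V pT(1) by (auto simp: doubleton_eq_iff)
        have "right_angle_at (pl {p, a}) (pl {q, a}) z"
          using RA'[OF Ea Ea ne EIA EIA] T'V pT(1) qT(1) z1m z2m by blast
        then have "inner (pos p - A) (pos q - A) = 0" using straight_ra SA pT(1) qT(1) by blast
        then show False using crossAA[OF pT(1) qT(1) z1m z2m] by blast
      qed
    qed
  next
    show "\<forall>p\<in>M \<sigma>. \<forall>q\<in>M \<sigma>. bb \<sigma> p = bb \<sigma> q \<longrightarrow> p = q"
    proof (intro ballI impI)
      fix p q assume p: "p \<in> M \<sigma>" and q: "q \<in> M \<sigma>" and eq: "bb \<sigma> p = bb \<sigma> q"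
      show "p = q"
      proof (rule ccontr)
        assume pq: "p \<noteq> q"
        have pT: "p \<in> T'" "\<sigma> * Y p > 0" using p unfolding M_def by auto
        have qT: "q \<in> T'" "\<sigma> * Y q > 0" using q unfolding M_def by auto
        obtain s t where st: "0 < s" "s < 1" "0 < t" "t < 1" "s * (D - X p) = t * (D - X q)" "s * Y p = t * Y q"
          using INJ[OF sg pT(2) qT(2), of "D - X p" "D - X q"] eq unfolding bb_def by blast
        have st5: "D + s * (X p - D) = D + t * (X q - D)" using st(5) by (simp add: algebra_simps)
        define z where "z = (1 - s) *\<^sub>R B + s *\<^sub>R pos p"
        have z2: "z = (1 - t) *\<^sub>R B + t *\<^sub>R pos q"
          unfolding z_def by (rule coord_eq[OF AB]) (use st st5 in \<open>simp_all add: xc_B yc_B X_def Y_def D_def\<close>)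
        have z1m: "z \<in> open_segment (pos p) B" unfolding z_def
          using seg_mem[OF st(1,2)] PB T'V pT(1) by metis
        have z2m: "z \<in> open_segment (pos q) B" unfolding z2
          using seg_mem[OF st(3,4)] PB T'V qT(1) by metis
        have ne: "{p, c} \<noteq> {q, c}" using pq ua T'V pT(1) by (auto simp: doubleton_eq_iff)
        have "right_angle_at (pl {p, c}) (pl {q, c}) z"
          using RA'[OF Ec Ec ne EIB EIB] T'V pT(1) qT(1) z1m z2m by blast
        then have "inner (pos p - B) (pos q - B) = 0" using straight_ra SB pT(1) qT(1) by blast
        then show False using crossBB[OF pT(1) qT(1) z1m z2m] by blast
      qed
    qed
  next
    show "\<forall>p\<in>M \<sigma>. \<forall>q\<in>M \<sigma>. aa \<sigma> q < aa \<sigma> p \<and> bb \<sigma> p < bb \<sigma> q \<longrightarrow> aa \<sigma> p * bb \<sigma> q = 1"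
    proof (intro ballI impI)
      fix p q assume p: "p \<in> M \<sigma>" and q: "q \<in> M \<sigma>" and lt: "aa \<sigma> q < aa \<sigma> p \<and> bb \<sigma> p < bb \<sigma> q"
      have pT: "p \<in> T'" "\<sigma> * Y p > 0" using p unfolding M_def by auto
      have qT: "q \<in> T'" "\<sigma> * Y q > 0" using q unfolding M_def by auto
      obtain s t where st: "0 < s" "s < 1" "0 < t" "t < 1" "s * X p = D + t * (X q - D)" "s * Y p = t * Y q"
        using FORCE[OF Dp sg pT(2) qT(2)] lt unfolding aa_def bb_def by blast
      define z where "z = (1 - s) *\<^sub>R A + s *\<^sub>R pos p"
      have z2: "z = (1 - t) *\<^sub>R B + t *\<^sub>R pos q"
        unfolding z_def by (rule coord_eq[OF AB]) (use st in \<open>simp_all add: xc_A yc_A xc_B yc_B X_def Y_def D_def\<close>)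
      have z1m: "z \<in> open_segment (pos p) A" unfolding z_def
        using seg_mem[OF st(1,2)] PA T'V pT(1) by metis
      have z2m: "z \<in> open_segment (pos q) B" unfolding z2
        using seg_mem[OF st(3,4)] PB T'V qT(1) by metis
      have ne: "{p, a} \<noteq> {q, c}" using ua T'V qT(1) ac(1) by (auto simp: doubleton_eq_iff)
      have "right_angle_at (pl {p, a}) (pl {q, c}) z"
        using RA'[OF Ea Ec ne EIA EIB] T'V pT(1) qT(1) z1m z2m by blast
      then have "inner (pos p - A) (pos q - B) = 0" using straight_ra SA SB pT(1) qT(1) by blast
      then have "X p * (X q - D) + Y p * Y q = 0"
        using inner_AB[of A B "pos p" "pos q"] unfolding X_def Y_def D_def by simp
      then show "aa \<sigma> p * bb \<sigma> q = 1" unfolding aa_def bb_def using ORTH[OF sg pT(2) qT(2)] by blast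
    qed
  next
    show "\<forall>p\<in>M \<sigma>. aa \<sigma> p + bb \<sigma> p > 0"
    proof
      fix p assume "p \<in> M \<sigma>"
      then have "\<sigma> * Y p > 0" unfolding M_def by auto
      then have "D / (\<sigma> * Y p) > 0" using Dp by simp
      moreover have "aa \<sigma> p + bb \<sigma> p = D / (\<sigma> * Y p)"
        unfolding aa_def bb_def by (simp add: add_divide_distrib[symmetric])
      ultimately show "aa \<sigma> p + bb \<sigma> p > 0" by simp
    qed
  qed
  have sub: "S \<subseteq> SS 1 \<union> SS (-1)"
  proof
    fix v assume "v \<in> S"
    then obtain w e f where v: "v \<in> T'" and w: "w \<in> T'" "w \<noteq> v" and ef: "e \<in> E" "f \<in> E" "v \<in> e" "w \<in> f"
      "crosses pl e f" unfolding S_def by blast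
    have "rel v w \<or> rel w v" using CR[OF v w(1) ef] .
    then show "v \<in> SS 1 \<union> SS (-1)"
    proof
      assume r: "rel v w"
      then obtain s t where st: "0 < s" "s < 1" "0 < t" "t < 1" "s * X v = D + t * (X w - D)"
        "s * Y v = t * Y w" "X v * (X w - D) + Y v * Y w = 0" unfolding rel_def by blast
      have "Y v \<noteq> 0" using REL0[OF st(1,3,6,7)] NA NB T'V v w(1) by blast
      define \<sigma> where "\<sigma> = (if Y v > 0 then 1 else (-1::real))"
      have sg: "\<sigma> = 1 \<or> \<sigma> = -1" "\<sigma> * Y v > 0" unfolding \<sigma>_def using \<open>Y v \<noteq> 0\<close> by auto
      have R: "\<sigma> * Y w > 0 \<and> aa \<sigma> w < aa \<sigma> v \<and> bb \<sigma> v < bb \<sigma> w"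
        using REL1[OF Dp st(1-6) sg(2)] unfolding aa_def bb_def by blast
      have "v \<in> SS \<sigma>" unfolding SS_def M_def using v w sg R by blast
      then show ?thesis using sg by auto
    next
      assume r: "rel w v"
      then obtain s t where st: "0 < s" "s < 1" "0 < t" "t < 1" "s * X w = D + t * (X v - D)"
        "s * Y w = t * Y v" "X w * (X v - D) + Y w * Y v = 0" unfolding rel_def by blast
      have "Y w \<noteq> 0" using REL0[OF st(1,3,6,7)] NA NB T'V v w(1) by blast
      define \<sigma> where "\<sigma> = (if Y w > 0 then 1 else (-1::real))"
      have sg: "\<sigma> = 1 \<or> \<sigma> = -1" "\<sigma> * Y w > 0" unfolding \<sigma>_def using \<open>Y w \<noteq> 0\<close> by auto
      have R: "\<sigma> * Y v > 0 \<and> aa \<sigma> v < aa \<sigma> w \<and> bb \<sigma> w < bb \<sigma> v"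
        using REL1[OF Dp st(1-6) sg(2)] unfolding aa_def bb_def by blast
      have "v \<in> SS \<sigma>" unfolding SS_def M_def using v w sg R by blast
      then show ?thesis using sg by auto
    qed
  qed
  have fin: "finite (SS 1 \<union> SS (-1))"
  proof (rule finite_subset[OF _ G(1)])
    show "SS 1 \<union> SS (-1) \<subseteq> V" unfolding SS_def M_def using T'V TN by blast
  qed
  have "card S \<le> card (SS 1 \<union> SS (-1))" using card_mono[OF fin sub] .
  also have "\<dots> \<le> card (SS 1) + card (SS (-1))" by (rule card_Un_le)
  also have "\<dots> \<le> 4" using cardSS[of 1] cardSS[of "-1"] by simp
  finally show ?thesis unfolding S_def T'_def .
qed

end
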